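(* Let $q$ be a prime power, $n,r$ integers with $r\le\lfloor n/2\rfloor$, $0<\rho<r$, and let $\mathcal{C}\subseteq E_r(q,n)$ have covering radius $\rho$. Let $\mathcal{A} = \{U\in E_r(q,n): d_{\mathrm{I}}(U,\mathcal{C}) = \rho\}$ and $\mathcal{Z} = \{Z\in E_r(q,n): E_{\mathcal{C}}(\{Z\})\ge 1\}$. Then for every $Z\in\mathcal{Z}$, $|\mathcal{A}\cap B_1(Z)|\le V_{\mathrm{C}}(1) - c_\rho$.
   Context: $E_r(q,n)$ is the set of $r$-dimensional subspaces of $\mathrm{GF}(q)^n$ with injection distance $d_{\mathrm{I}}(U,V)=\dim(U+V)-\min\{\dim U,\dim V\}$; $d_{\mathrm{I}}(U,\mathcal{C})=\min_{C\in\mathcal{C}}d_{\mathrm{I}}(U,C)$; $B_t(U)=\{V\in E_r(q,n): d_{\mathrm{I}}(U,V)\le t\}$. The covering radius of $\mathcal{C}$ is $\max_U d_{\mathrm{I}}(U,\mathcal{C})$. For $V\subseteq E_r(q,n)$, $E_{\mathcal{C}}(V) = \sum_{C\in\mathcal{C}}|B_\rho(C)\cap V| - |V|$. ${m\brack k}=\prod_{i=0}^{k-1}\frac{q^m-q^i}{q^k-q^i}$; $N_{\mathrm{C}}(d) = q^{d^2}{r\brack d}{n-r \brack d}$, $V_{\mathrm{C}}(t)=\sum_{d=0}^tN_{\mathrm{C}}(d)$; $c_j = {j\brack 1}^2$. *)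

theory Defs
  imports "HOL-Analysis.Analysis"
begin

text \<open>Ambient space GF(q)^n is modelled as 'a ^ 'n, where 'a is a finite field
  (so q = CARD('a) is a prime power) and n = CARD('n).\<close>

definition Er :: "nat \<Rightarrow> ('a::{field,finite} ^ 'n) set set" where
  "Er r = {U. vec.subspace U \<and> vec.dim U = r}"

definition ssum :: "('a::{field,finite} ^ 'n) set \<Rightarrow> ('a ^ 'n) set \<Rightarrow> ('a ^ 'n) set" where
  "ssum U V = {u + v | u v. u \<in> U \<and> v \<in> V}"

definition dI :: "('a::{field,finite} ^ 'n) set \<Rightarrow> ('a ^ 'n) set \<Rightarrow> nat" where
  "dI U V = vec.dim (ssum U V) - min (vec.dim U) (vec.dim V)"

definition dIset :: "('a::{field,finite} ^ 'n) set \<Rightarrow> ('a ^ 'n) set set \<Rightarrow> nat" where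
  "dIset U C = Min ((\<lambda>X. dI U X) ` C)"

definition ball_I :: "nat \<Rightarrow> nat \<Rightarrow> ('a::{field,finite} ^ 'n) set \<Rightarrow> ('a ^ 'n) set set" where
  "ball_I r t U = {V \<in> Er r. dI U V \<le> t}"

definition covering_radius :: "nat \<Rightarrow> ('a::{field,finite} ^ 'n) set set \<Rightarrow> nat" where
  "covering_radius r C = Max ((\<lambda>U. dIset U C) ` Er r)"

definition excess :: "nat \<Rightarrow> nat \<Rightarrow> ('a::{field,finite} ^ 'n) set set \<Rightarrow> ('a ^ 'n) set set \<Rightarrow> int" where
  "excess r rho C V = (\<Sum>X\<in>C. int (card (ball_I r rho X \<inter> V))) - int (card V)"

definition gbinom :: "nat \<Rightarrow> nat \<Rightarrow> nat \<Rightarrow> real" where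
  "gbinom q m k = (\<Prod>i<k. (real q ^ m - real q ^ i) / (real q ^ k - real q ^ i))"

definition NC :: "nat \<Rightarrow> nat \<Rightarrow> nat \<Rightarrow> nat \<Rightarrow> real" where
  "NC q n r d = real q ^ (d^2) * gbinom q r d * gbinom q (n - r) d"

definition VC :: "nat \<Rightarrow> nat \<Rightarrow> nat \<Rightarrow> nat \<Rightarrow> real" where
  "VC q n r t = (\<Sum>d\<le>t. NC q n r d)"

definition cc :: "nat \<Rightarrow> nat \<Rightarrow> real" where
  "cc q j = (gbinom q j 1)^2"

end

theory Submission imports Defs begin

lemma card_span_indep:
  fixes B :: "('a::{field,finite} ^ 'n) set"
  assumes "vec.independent B"
  shows "card (vec.span B) = CARD('a) ^ card B"
proof -
  have "finite B" using assms vec.finiteI_independent by blast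
  then show ?thesis using assms
  proof (induction B rule: finite_induct)
    case empty
    then show ?case by (simp add: vec.span_empty)
  next
    case (insert x F)
    have iF: "vec.independent F" and xF: "x \<notin> vec.span F"
      using insert.prems insert.hyps(2) by (auto simp: vec.independent_insert)
    define f where "f = (\<lambda>(w, c::'a). w + c *s x)"
    have eq: "vec.span (insert x F) = f ` (vec.span F \<times> UNIV)"
    proof
      show "vec.span (insert x F) \<subseteq> f ` (vec.span F \<times> UNIV)"
      proof
        fix y assume "y \<in> vec.span (insert x F)"
        then obtain k where k: "y - k *s x \<in> vec.span F" by (auto simp: vec.span_insert)
        then show "y \<in> f ` (vec.span F \<times> UNIV)" unfolding f_def
          by (intro image_eqI[of _ _ "(y - k *s x, k)"]) auto
      qed
    next
      show "f ` (vec.span F \<times> UNIV) \<subseteq> vec.span (insert x F)"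
        unfolding f_def
        by (auto intro!: vec.span_add vec.span_scale
                 intro: vec.span_mono[THEN subsetD, of F] vec.span_base)
    qed
    have inj: "inj_on f (vec.span F \<times> UNIV)"
    proof (rule inj_onI, clarify)
      fix w1 c1 w2 c2 assume w: "w1 \<in> vec.span F" "w2 \<in> vec.span F"
        and e: "f (w1, c1) = f (w2, c2)"
      have e2: "(c1 - c2) *s x = w2 - w1" using e unfolding f_def
        by (simp add: algebra_simps vector_sub_rdistrib)
      show "w1 = w2 \<and> c1 = c2"
      proof (cases "c1 = c2")
        case True then show ?thesis using e2 by simp
      next
        case False
        have "w2 - w1 \<in> vec.span F" using w by (simp add: vec.span_diff)
        then have "(inverse (c1 - c2)) *s ((c1 - c2) *s x) \<in> vec.span F"
          unfolding e2 by (rule vec.span_scale)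
        moreover have "(inverse (c1 - c2)) *s ((c1 - c2) *s x) = x"
          using False by (simp only: vector_smult_assoc) simp
        ultimately have "x \<in> vec.span F" by simp
        then show ?thesis using xF by blast
      qed
    qed
    have "card (vec.span (insert x F)) = card (vec.span F \<times> (UNIV::'a set))"
      using eq card_image[OF inj] by simp
    also have "\<dots> = card (vec.span F) * CARD('a)" by (simp add: card_cartesian_product)
    also have "\<dots> = CARD('a) ^ card (insert x F)" using insert iF by simp
    finally show ?case .
  qed
qed

lemma card_subspace:
  fixes S :: "('a::{field,finite} ^ 'n) set"
  assumes "vec.subspace S"
  shows "card S = CARD('a) ^ vec.dim S"
proof -
  obtain B where "finite B" "B \<subseteq> S" "vec.independent B" "vec.span B = S" "card B = vec.dim S"
    using vec.basis_subspace_exists[OF assms] by blast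
  then show ?thesis using card_span_indep by metis
qed

lemma span_insert_mem:
  fixes H V :: "('a::{field,finite} ^ 'n) set"
  assumes "vec.subspace H" "vec.subspace V" "H \<subseteq> V" "v \<in> V" "v \<notin> H"
    "vec.dim V = Suc (vec.dim H)"
  shows "vec.span (insert v H) = V"
proof -
  have d: "vec.dim (vec.span (insert v H)) = Suc (vec.dim H)"
    using assms by (simp add: vec.dim_insert vec.span_eq_iff[THEN iffD2])
  have "vec.span (insert v H) \<subseteq> V" using assms by (intro vec.span_minimal) auto
  then show ?thesis using d assms
    by (intro vec.subspace_dim_equal) (auto simp: vec.subspace_span)
qed

lemma count_ext:
  fixes H X :: "('a::{field,finite} ^ 'n) set"
  assumes HX: "vec.subspace H" "vec.subspace X" "H \<subseteq> X"
  shows "card {V. vec.subspace V \<and> vec.dim V = Suc (vec.dim H) \<and> H \<subseteq> V \<and> V \<subseteq> X}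
           * (CARD('a) ^ Suc (vec.dim H) - CARD('a) ^ vec.dim H)
         = CARD('a) ^ vec.dim X - CARD('a) ^ vec.dim H"
proof -
  define F where "F = {V. vec.subspace V \<and> vec.dim V = Suc (vec.dim H) \<and> H \<subseteq> V \<and> V \<subseteq> X}"
  have un: "X - H = (\<Union>V\<in>F. V - H)"
  proof
    show "X - H \<subseteq> (\<Union>V\<in>F. V - H)"
    proof
      fix v assume v: "v \<in> X - H"
      have d: "vec.dim (vec.span (insert v H)) = Suc (vec.dim H)"
        using v HX by (simp add: vec.dim_insert vec.span_eq_iff[THEN iffD2])
      have "vec.span (insert v H) \<subseteq> X" using v HX by (intro vec.span_minimal) auto
      then have "vec.span (insert v H) \<in> F" unfolding F_def using d
        by (auto simp: vec.subspace_span intro: vec.span_base)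
      moreover have "v \<in> vec.span (insert v H) - H" using v by (auto intro: vec.span_base)
      ultimately show "v \<in> (\<Union>V\<in>F. V - H)" by blast
    qed
  qed (auto simp: F_def)
  have fin: "finite F" by simp
  have disj: "\<forall>A\<in>F. \<forall>B\<in>F. A \<noteq> B \<longrightarrow> (A - H) \<inter> (B - H) = {}"
  proof (intro ballI impI)
    fix A B assume A: "A \<in> F" and B: "B \<in> F" and ne: "A \<noteq> B"
    show "(A - H) \<inter> (B - H) = {}"
    proof (rule ccontr)
      assume "(A - H) \<inter> (B - H) \<noteq> {}"
      then obtain v where "v \<in> A" "v \<in> B" "v \<notin> H" by blast
      then have "vec.span (insert v H) = A" "vec.span (insert v H) = B"
        using A B HX unfolding F_def by (simp_all add: span_insert_mem)
      then show False using ne by simp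
    qed
  qed
  have cV: "card (V - H) = CARD('a) ^ Suc (vec.dim H) - CARD('a) ^ vec.dim H" if "V \<in> F" for V
    using that HX unfolding F_def by (auto simp: card_Diff_subset card_subspace)
  have "card (X - H) = (\<Sum>V\<in>F. card (V - H))"
    unfolding un by (rule card_UN_disjoint) (use fin disj in auto)
  also have "\<dots> = card F * (CARD('a) ^ Suc (vec.dim H) - CARD('a) ^ vec.dim H)"
    using cV by simp
  finally show ?thesis using HX unfolding F_def
    by (simp add: card_Diff_subset card_subspace)
qed

definition tup :: "('a::{field,finite} ^ 'n) set \<Rightarrow> nat \<Rightarrow> ('a ^ 'n) list set" where
  "tup S k = {xs. length xs = k \<and> set xs \<subseteq> S \<and> distinct xs \<and> vec.independent (set xs)}"

lemma finite_tup: "finite (tup S k)"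
proof -
  have "tup S k \<subseteq> {xs. set xs \<subseteq> UNIV \<and> length xs = k}" unfolding tup_def by auto
  then show ?thesis by (rule finite_subset) (rule finite_lists_length_eq, simp)
qed

lemma tup_Suc:
  fixes S :: "('a::{field,finite} ^ 'n) set"
  shows "tup S (Suc k) = (\<lambda>(xs, v). xs @ [v]) ` (SIGMA xs:tup S k. S - vec.span (set xs))"
proof
  show "tup S (Suc k) \<subseteq> (\<lambda>(xs, v). xs @ [v]) ` (SIGMA xs:tup S k. S - vec.span (set xs))"
  proof
    fix zs assume zs: "zs \<in> tup S (Suc k)"
    then have "zs \<noteq> []" unfolding tup_def by auto
    then obtain ys v where e: "zs = ys @ [v]" by (metis rev_exhaust)
    have "v \<notin> set ys" "vec.independent (insert v (set ys))" "distinct ys" "length ys = k"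
      "set ys \<subseteq> S" "v \<in> S"
      using zs unfolding e tup_def by auto
    then have "ys \<in> tup S k" "v \<in> S - vec.span (set ys)"
      unfolding tup_def by (auto simp: vec.independent_insert)
    then show "zs \<in> (\<lambda>(xs, v). xs @ [v]) ` (SIGMA xs:tup S k. S - vec.span (set xs))"
      unfolding e by force
  qed
next
  show "(\<lambda>(xs, v). xs @ [v]) ` (SIGMA xs:tup S k. S - vec.span (set xs)) \<subseteq> tup S (Suc k)"
  proof clarify
    fix xs v assume xs: "xs \<in> tup S k" and v: "v \<in> S" "v \<notin> vec.span (set xs)"
    then have "v \<notin> set xs" by (auto intro: vec.span_base)
    then show "xs @ [v] \<in> tup S (Suc k)" using xs v unfolding tup_def
      by (auto simp: vec.independent_insert)
  qed
qed

lemma card_tup: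
  fixes S :: "('a::{field,finite} ^ 'n) set"
  assumes S: "vec.subspace S"
  shows "k \<le> vec.dim S \<Longrightarrow> real (card (tup S k)) = (\<Prod>i<k. real CARD('a) ^ vec.dim S - real CARD('a) ^ i)"
proof (induction k)
  case 0
  have "tup S 0 = {[]}" unfolding tup_def using vec.independent_empty by auto
  then show ?case by simp
next
  case (Suc k)
  have q1: "1 \<le> CARD('a)" by (simp add: Suc_leI)
  have inj: "inj_on (\<lambda>(xs, v). xs @ [v]) (SIGMA xs:tup S k. S - vec.span (set xs))"
    by (auto simp: inj_on_def)
  have c: "card (S - vec.span (set xs)) = CARD('a) ^ vec.dim S - CARD('a) ^ k" if "xs \<in> tup S k" for xs
  proof -
    have "vec.span (set xs) \<subseteq> S" using that S unfolding tup_def by (intro vec.span_minimal) auto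
    moreover have "card (vec.span (set xs)) = CARD('a) ^ k"
      using that card_span_indep[of "set xs"] unfolding tup_def by (auto simp: distinct_card)
    ultimately show ?thesis by (simp add: card_Diff_subset card_subspace S)
  qed
  have "card (tup S (Suc k)) = card (SIGMA xs:tup S k. S - vec.span (set xs))"
    unfolding tup_Suc using card_image[OF inj] by simp
  also have "\<dots> = (\<Sum>xs\<in>tup S k. card (S - vec.span (set xs)))"
    by (rule card_SigmaI) (auto simp: finite_tup)
  also have "\<dots> = card (tup S k) * (CARD('a) ^ vec.dim S - CARD('a) ^ k)"
    using c by simp
  finally have e: "card (tup S (Suc k)) = card (tup S k) * (CARD('a) ^ vec.dim S - CARD('a) ^ k)" .
  have le: "CARD('a) ^ k \<le> CARD('a) ^ vec.dim S" using Suc.prems q1 by (intro power_increasing) auto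
  show ?case using Suc e le by (simp add: of_nat_diff)
qed

lemma card_sub:
  fixes S :: "('a::{field,finite} ^ 'n) set"
  assumes S: "vec.subspace S" and k: "k \<le> vec.dim S"
  shows "real (card {W. vec.subspace W \<and> vec.dim W = k \<and> W \<subseteq> S})
           * (\<Prod>i<k. real CARD('a) ^ k - real CARD('a) ^ i)
         = (\<Prod>i<k. real CARD('a) ^ vec.dim S - real CARD('a) ^ i)"
proof -
  define F where "F = {W. vec.subspace W \<and> vec.dim W = k \<and> W \<subseteq> S}"
  have spanW: "vec.span (set xs) = W" if "xs \<in> tup W k" "W \<in> F" for xs W
  proof -
    have "vec.span (set xs) \<subseteq> W" using that unfolding tup_def F_def by (intro vec.span_minimal) auto
    moreover have "vec.dim (vec.span (set xs)) = k" using that unfolding tup_def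
      by (auto simp: vec.dim_eq_card_independent distinct_card)
    ultimately show ?thesis using that unfolding F_def
      by (intro vec.subspace_dim_equal) (auto simp: vec.subspace_span)
  qed
  have un: "tup S k = (\<Union>W\<in>F. tup W k)"
  proof
    show "tup S k \<subseteq> (\<Union>W\<in>F. tup W k)"
    proof
      fix xs assume xs: "xs \<in> tup S k"
      have "vec.dim (set xs) = k" using xs unfolding tup_def
        by (auto simp: vec.dim_eq_card_independent distinct_card)
      moreover have "vec.span (set xs) \<subseteq> S" using xs S unfolding tup_def
        by (intro vec.span_minimal) auto
      ultimately have "vec.span (set xs) \<in> F" unfolding F_def
        by (auto simp: vec.subspace_span)
      moreover have "xs \<in> tup (vec.span (set xs)) k" using xs unfolding tup_def
        by (auto intro: vec.span_base)
      ultimately show "xs \<in> (\<Union>W\<in>F. tup W k)" by blast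
    qed
  qed (auto simp: F_def tup_def)
  have "card (tup S k) = (\<Sum>W\<in>F. card (tup W k))"
    unfolding un
  proof (rule card_UN_disjoint)
    show "\<forall>i\<in>F. \<forall>j\<in>F. i \<noteq> j \<longrightarrow> tup i k \<inter> tup j k = {}"
      using spanW by blast
  qed (auto simp: finite_tup)
  then have "real (card (tup S k)) = (\<Sum>W\<in>F. real (card (tup W k)))" by simp
  also have "\<dots> = (\<Sum>W\<in>F. (\<Prod>i<k. real CARD('a) ^ k - real CARD('a) ^ i))"
    by (rule sum.cong) (auto simp: F_def card_tup)
  finally show ?thesis using card_tup[OF S k] unfolding F_def by simp
qed

lemma prod_shift_pow:
  fixes x :: real
  shows "(\<Prod>i<Suc m. x ^ Suc M - x ^ i) = (x ^ Suc M - 1) * x ^ m * (\<Prod>i<m. x ^ M - x ^ i)"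
proof -
  have "(\<Prod>i<Suc m. x ^ Suc M - x ^ i) = (x ^ Suc M - 1) * (\<Prod>i<m. x ^ Suc M - x ^ Suc i)"
    by (subst prod.lessThan_Suc_shift) simp
  also have "(\<Prod>i<m. x ^ Suc M - x ^ Suc i) = (\<Prod>i<m. x * (x ^ M - x ^ i))"
    by (simp add: algebra_simps)
  also have "\<dots> = x ^ m * (\<Prod>i<m. x ^ M - x ^ i)"
    by (simp add: prod.distrib)
  finally show ?thesis by simp
qed

lemma prod_ident:
  fixes x :: real
  shows "(\<Prod>i<m. x ^ Suc m - x ^ i) * (x - 1) = (x ^ Suc m - 1) * (\<Prod>i<m. x ^ m - x ^ i)"
proof (induction m)
  case 0 then show ?case by simp
next
  case (Suc m)
  have "(\<Prod>i<Suc m. x ^ Suc (Suc m) - x ^ i) * (x - 1)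
      = (x ^ Suc (Suc m) - 1) * x ^ m * ((\<Prod>i<m. x ^ Suc m - x ^ i) * (x - 1))"
    by (subst prod_shift_pow[where x=x and m=m and M="Suc m"]) simp
  also have "\<dots> = (x ^ Suc (Suc m) - 1) * x ^ m * ((x ^ Suc m - 1) * (\<Prod>i<m. x ^ m - x ^ i))"
    using Suc by simp
  also have "\<dots> = (x ^ Suc (Suc m) - 1) * (\<Prod>i<Suc m. x ^ Suc m - x ^ i)"
    by (subst prod_shift_pow[where x=x and m=m and M=m]) simp
  finally show ?case .
qed

lemma gbinom_1: "gbinom q m 1 = (real q ^ m - 1) / (real q - 1)"
  by (simp add: gbinom_def)

lemma gbinom_Suc0 [simp]: "gbinom q m (Suc 0) = (real q ^ m - 1) / (real q - 1)"
  by (simp add: gbinom_def)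

lemma gbinom_0: "gbinom q m 0 = 1"
  by (simp add: gbinom_def)

lemma card_ge2: "2 \<le> CARD('a::{field,finite})"
proof -
  have "card {0::'a, 1} \<le> CARD('a)" by (rule card_mono) auto
  then show ?thesis by simp
qed

lemma card_hyp:
  fixes S :: "('a::{field,finite} ^ 'n) set"
  assumes S: "vec.subspace S" and d: "vec.dim S = Suc m"
  shows "real (card {W. vec.subspace W \<and> vec.dim W = m \<and> W \<subseteq> S}) = gbinom CARD('a) (Suc m) 1"
proof -
  let ?x = "real CARD('a)"
  have q2: "2 \<le> CARD('a)" using card_ge2 .
  have x1: "?x > 1" using q2 by simp
  have cs: "real (card {W. vec.subspace W \<and> vec.dim W = m \<and> W \<subseteq> S}) * (\<Prod>i<m. ?x ^ m - ?x ^ i)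
           = (\<Prod>i<m. ?x ^ Suc m - ?x ^ i)"
    using card_sub[OF S, of m] d by simp
  have B: "(\<Prod>i<m. ?x ^ m - ?x ^ i) \<noteq> 0"
  proof -
    have "?x ^ m - ?x ^ i \<noteq> 0" if "i < m" for i using x1 that power_strict_increasing[of i m ?x] by simp
    then show ?thesis by (subst prod_zero_iff) auto
  qed
  have "real (card {W. vec.subspace W \<and> vec.dim W = m \<and> W \<subseteq> S}) * (\<Prod>i<m. ?x ^ m - ?x ^ i) * (?x - 1)
        = (?x ^ Suc m - 1) * (\<Prod>i<m. ?x ^ m - ?x ^ i)"
    using cs prod_ident[of ?x m] by simp
  then have "(real (card {W. vec.subspace W \<and> vec.dim W = m \<and> W \<subseteq> S}) * (?x - 1)) * (\<Prod>i<m. ?x ^ m - ?x ^ i)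
     = (?x ^ Suc m - 1) * (\<Prod>i<m. ?x ^ m - ?x ^ i)"
    by (simp add: ac_simps)
  then have "real (card {W. vec.subspace W \<and> vec.dim W = m \<and> W \<subseteq> S}) * (?x - 1) = ?x ^ Suc m - 1"
    using B mult_right_cancel by blast
  then show ?thesis unfolding gbinom_1 using x1 by (simp add: field_simps)
qed

lemma subspace_ssum: "vec.subspace U \<Longrightarrow> vec.subspace V \<Longrightarrow> vec.subspace (ssum U V)"
  unfolding ssum_def by (rule vec.subspace_sums)

lemma dim_ssum: "vec.subspace U \<Longrightarrow> vec.subspace V \<Longrightarrow>
   vec.dim (ssum U V) + vec.dim (U \<inter> V) = vec.dim U + vec.dim V"
  unfolding ssum_def by (rule vec.dim_sums_Int)

lemma ssum_sub: "vec.subspace Z \<Longrightarrow> U \<subseteq> Z \<Longrightarrow> V \<subseteq> Z \<Longrightarrow> ssum U V \<subseteq> Z"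
  unfolding ssum_def by (auto intro: vec.subspace_add)

lemma ssum_sup1: "vec.subspace V \<Longrightarrow> U \<subseteq> ssum U V"
  unfolding ssum_def by (force intro: vec.subspace_0)

lemma ssum_sup2: "vec.subspace U \<Longrightarrow> V \<subseteq> ssum U V"
  unfolding ssum_def by (force intro: vec.subspace_0)

lemma complement:
  fixes K Z :: "('a::{field,finite} ^ 'n) set"
  assumes K: "vec.subspace K" and Z: "vec.subspace Z" and KZ: "K \<subseteq> Z"
  obtains T where "vec.subspace T" "T \<subseteq> Z" "K \<inter> T \<subseteq> {0}" "vec.dim K + vec.dim T = vec.dim Z"
proof -
  obtain B where B: "finite B" "B \<subseteq> K" "vec.independent B" "vec.span B = K" "card B = vec.dim K"
    using vec.basis_subspace_exists[OF K] by blast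
  obtain B' where B': "B \<subseteq> B'" "B' \<subseteq> Z" "vec.independent B'" "Z \<subseteq> vec.span B'"
    using vec.maximal_independent_subset_extend[of B Z] B KZ by blast
  have fB': "finite B'" using B' vec.finiteI_independent by blast
  have spZ: "vec.span B' = Z" using B' Z by (intro vec.span_subspace) auto
  define T where "T = vec.span (B' - B)"
  have T: "vec.subspace T" unfolding T_def by (rule vec.subspace_span)
  have TZ: "T \<subseteq> Z" unfolding T_def using B' Z by (intro vec.span_minimal) auto
  have dT: "vec.dim T = card (B' - B)" unfolding T_def
    using vec.independent_mono[OF B'(3), of "B' - B"] vec.dim_span_eq_card_independent by blast
  have cB': "card B' = card B + card (B' - B)" using B' fB'
    by (metis card_Diff_subset finite_subset le_add_diff_inverse card_mono)
  have dZ: "vec.dim Z = card B'" using spZ B'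
    by (metis vec.dim_span_eq_card_independent)
  have sum: "ssum K T = Z"
  proof -
    have "ssum K T = vec.span (B \<union> (B' - B))"
      unfolding ssum_def T_def vec.span_Un B(4) ..
    also have "B \<union> (B' - B) = B'" using B' by blast
    finally show ?thesis using spZ by simp
  qed
  have "vec.dim (K \<inter> T) = 0" using dim_ssum[OF K T] sum dZ dT cB' B by simp
  then have "K \<inter> T \<subseteq> {0}" by simp
  then show ?thesis using that T TZ dT cB' dZ B by simp
qed

lemma hyp_containing:
  fixes K Z :: "('a::{field,finite} ^ 'n) set"
  assumes K: "vec.subspace K" and Z: "vec.subspace Z" and KZ: "K \<subseteq> Z"
    and d: "vec.dim Z = vec.dim K + s"
  shows "gbinom CARD('a) s 1 \<le> real (card {H. vec.subspace H \<and> vec.dim H = vec.dim Z - 1 \<and> K \<subseteq> H \<and> H \<subseteq> Z})"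
proof (cases s)
  case 0
  have "gbinom CARD('a) 0 1 = 0" unfolding gbinom_1 by simp
  then show ?thesis using 0 by (simp only: of_nat_0_le_iff)
next
  case (Suc t)
  obtain T where T: "vec.subspace T" "T \<subseteq> Z" "K \<inter> T \<subseteq> {0}" "vec.dim K + vec.dim T = vec.dim Z"
    using complement[OF K Z KZ] by blast
  have dT: "vec.dim T = Suc t" using T d Suc by simp
  define HT where "HT = {W. vec.subspace W \<and> vec.dim W = t \<and> W \<subseteq> T}"
  define Tg where "Tg = {H. vec.subspace H \<and> vec.dim H = vec.dim Z - 1 \<and> K \<subseteq> H \<and> H \<subseteq> Z}"
  have inj: "inj_on (ssum K) HT"
  proof (rule inj_onI)
    fix G1 G2 assume G1: "G1 \<in> HT" and G2: "G2 \<in> HT" and e: "ssum K G1 = ssum K G2"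
    have key: "ssum K G \<inter> T = G" if "G \<in> HT" for G
    proof
      show "ssum K G \<inter> T \<subseteq> G"
      proof
        fix x assume x: "x \<in> ssum K G \<inter> T"
        then obtain k g where kg: "x = k + g" "k \<in> K" "g \<in> G" unfolding ssum_def by blast
        have "g \<in> T" using kg that unfolding HT_def by auto
        then have "k \<in> T" using x kg T(1) vec.subspace_diff[OF T(1), of x g] by auto
        then have "k = 0" using kg T(3) by auto
        then show "x \<in> G" using kg by simp
      qed
    next
      show "G \<subseteq> ssum K G \<inter> T" using that K ssum_sup2 unfolding HT_def by blast
    qed
    show "G1 = G2" using key[OF G1] key[OF G2] e by (metis)
  qed
  have img: "ssum K ` HT \<subseteq> Tg"
  proof
    fix H assume "H \<in> ssum K ` HT"
    then obtain G where G: "G \<in> HT" "H = ssum K G" by blast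
    have GZ: "G \<subseteq> Z" using G T unfolding HT_def by auto
    have "K \<inter> G \<subseteq> {0}" using G T unfolding HT_def by auto
    then have d0: "vec.dim (K \<inter> G) = 0" by simp
    have "vec.dim (ssum K G) + vec.dim (K \<inter> G) = vec.dim K + vec.dim G"
      using dim_ssum[OF K] G unfolding HT_def by auto
    then have "vec.dim H = vec.dim K + t" using d0 G unfolding HT_def by simp
    moreover have "K \<subseteq> H" using G ssum_sup1 unfolding HT_def by blast
    moreover have "H \<subseteq> Z" using G ssum_sub[OF Z KZ GZ] by simp
    moreover have "vec.subspace H" using G K subspace_ssum unfolding HT_def by blast
    ultimately show "H \<in> Tg" unfolding Tg_def using d Suc by simp
  qed
  have "gbinom CARD('a) s 1 = real (card HT)" unfolding HT_def using card_hyp[OF T(1) dT] Suc by simp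
  also have "card HT = card (ssum K ` HT)" using card_image[OF inj] by simp
  also have "\<dots> \<le> card Tg" using img by (intro card_mono) auto
  finally show ?thesis unfolding Tg_def by simp
qed

lemma cnt_alg:
  fixes x c :: real
  assumes x: "x > 1" and e: "c * (x ^ Suc p - x ^ p) = x ^ (Suc p + m) - x ^ p"
  shows "c = (x ^ Suc m - 1) / (x - 1)"
proof -
  have a: "c * (x ^ Suc p - x ^ p) = x ^ p * (c * (x - 1))" by (simp add: algebra_simps)
  have b: "x ^ (Suc p + m) - x ^ p = x ^ p * (x ^ Suc m - 1)" by (simp add: algebra_simps power_add)
  have "x ^ p * (c * (x - 1)) = x ^ p * (x ^ Suc m - 1)" using e unfolding a b .
  moreover have "x ^ p \<noteq> 0" using x by simp
  ultimately have "c * (x - 1) = x ^ Suc m - 1" using mult_left_cancel by blast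
  then show ?thesis using x by (simp add: field_simps)
qed

lemma count_ext_g:
  fixes H X :: "('a::{field,finite} ^ 'n) set"
  assumes HX: "vec.subspace H" "vec.subspace X" "H \<subseteq> X"
    and d: "vec.dim X = Suc (vec.dim H) + m"
  shows "real (card {V. vec.subspace V \<and> vec.dim V = Suc (vec.dim H) \<and> H \<subseteq> V \<and> V \<subseteq> X})
     = gbinom CARD('a) (Suc m) 1"
proof -
  let ?x = "real CARD('a)"
  have q2: "2 \<le> CARD('a)" by (rule card_ge2)
  have e: "card {V. vec.subspace V \<and> vec.dim V = Suc (vec.dim H) \<and> H \<subseteq> V \<and> V \<subseteq> X}
           * (CARD('a) ^ Suc (vec.dim H) - CARD('a) ^ vec.dim H)
         = CARD('a) ^ vec.dim X - CARD('a) ^ vec.dim H" by (rule count_ext[OF HX])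
  have l1: "CARD('a) ^ vec.dim H \<le> CARD('a) ^ Suc (vec.dim H)" using q2 by (intro power_increasing) auto
  have l2: "CARD('a) ^ vec.dim H \<le> CARD('a) ^ vec.dim X" using q2 d by (intro power_increasing) auto
  have "real (card {V. vec.subspace V \<and> vec.dim V = Suc (vec.dim H) \<and> H \<subseteq> V \<and> V \<subseteq> X})
           * (?x ^ Suc (vec.dim H) - ?x ^ vec.dim H) = ?x ^ (Suc (vec.dim H) + m) - ?x ^ vec.dim H"
    using arg_cong[OF e, of real] l1 l2 d by (simp add: of_nat_diff)
  from cnt_alg[OF _ this] q2 show ?thesis by (simp add: gbinom_1)
qed

lemma g_Suc: "gbinom q (Suc m) 1 = 1 + real q * gbinom q m 1" if "q \<ge> 2"
  using that by (simp add: gbinom_1 field_simps)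

lemma g_nonneg: "q \<ge> 2 \<Longrightarrow> 0 \<le> gbinom q m 1"
  by (simp add: gbinom_1 divide_nonneg_nonneg)

lemma g_mono: assumes "q \<ge> 2" "m \<le> m'" shows "gbinom q m 1 \<le> gbinom q m' 1"
proof -
  have "real q ^ m \<le> real q ^ m'" using assms by (intro power_increasing) auto
  then show ?thesis unfolding gbinom_1 using assms by (intro divide_right_mono) auto
qed

lemma final_ineq:
  fixes x a G :: real
  assumes x: "x \<ge> 2" and a: "a \<ge> 0" and G: "G \<ge> 1 + x + x^2 * a"
  shows "(1 + x * a)^2 \<le> 1 + a * x * G"
proof -
  have ax: "a * x \<ge> 0" using x a by simp
  have "a * x * (1 + x + x^2 * a) \<le> a * x * G" using G ax by (rule mult_left_mono)
  moreover have "a * x \<le> a * x * x" using ax x by (simp add: mult_le_cancel_left1)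
  moreover have "(x * a)^2 \<le> (x * a)^2 * x" using x by (simp add: mult_le_cancel_left1)
  ultimately show ?thesis by (simp add: power2_eq_square algebra_simps)
qed

lemma sub_exists:
  fixes K0 :: "('a::{field,finite} ^ 'n) set"
  assumes "vec.subspace K0" "k \<le> vec.dim K0"
  obtains K where "vec.subspace K" "K \<subseteq> K0" "vec.dim K = k"
proof -
  obtain B where B: "finite B" "B \<subseteq> K0" "vec.independent B" "vec.span B = K0" "card B = vec.dim K0"
    using vec.basis_subspace_exists[OF assms(1)] by blast
  obtain T where T: "T \<subseteq> B" "card T = k" "finite T"
    using obtain_subset_with_card_n[of k B] B assms by auto
  have iT: "vec.independent T" using B T vec.independent_mono by blast
  have "vec.span T \<subseteq> K0" using T B assms by (intro vec.span_minimal) auto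
  moreover have "vec.dim (vec.span T) = k" using iT T vec.dim_span_eq_card_independent by metis
  ultimately show ?thesis using that vec.subspace_span by blast
qed

lemma finite_Er: "finite (Er r :: ('a::{field,finite} ^ 'n) set set)"
  by (rule finite_subset[OF subset_UNIV]) simp

lemma Er_iff: "U \<in> Er r \<longleftrightarrow> vec.subspace U \<and> vec.dim U = r"
  by (simp add: Er_def)

lemma dI_Er:
  assumes "U \<in> Er r" "V \<in> Er r"
  shows "dI U V = r - vec.dim (U \<inter> V)"
proof -
  have "vec.dim (ssum U V) + vec.dim (U \<inter> V) = r + r"
    using dim_ssum[of U V] assms by (auto simp: Er_iff)
  then show ?thesis unfolding dI_def using assms by (auto simp: Er_iff)
qed

lemma inter_hyp:
  fixes V Z H :: "('a::{field,finite} ^ 'n) set"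
  assumes V: "V \<in> Er r" and Z: "Z \<in> Er r" and H: "vec.subspace H" "vec.dim H = r - 1"
    "H \<subseteq> V" "H \<subseteq> Z" and ne: "V \<noteq> Z" and r: "r \<ge> 1"
  shows "V \<inter> Z = H"
proof -
  have sV: "vec.subspace V" "vec.dim V = r" and sZ: "vec.subspace Z" "vec.dim Z = r"
    using V Z by (auto simp: Er_iff)
  have sI: "vec.subspace (V \<inter> Z)" using sV sZ vec.subspace_inter by blast
  have "vec.dim (V \<inter> Z) < r"
  proof (rule ccontr)
    assume "\<not> vec.dim (V \<inter> Z) < r"
    then have "V \<inter> Z = V" using sI sV by (intro vec.subspace_dim_equal) auto
    then have "V \<subseteq> Z" by blast
    then have "V = Z" using sV sZ by (intro vec.subspace_dim_equal) auto
    then show False using ne by simp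
  qed
  then show ?thesis using H sI r by (intro vec.subspace_dim_equal[symmetric]) auto
qed

lemma inter_lt:
  assumes V: "V \<in> Er r" and Z: "Z \<in> Er r" and ne: "V \<noteq> Z"
  shows "vec.dim (V \<inter> Z) < r"
proof -
  have sV: "vec.subspace V" "vec.dim V = r" and sZ: "vec.subspace Z" "vec.dim Z = r"
    using V Z by (auto simp: Er_iff)
  have sI: "vec.subspace (V \<inter> Z)" using sV sZ vec.subspace_inter by blast
  show ?thesis
  proof (rule ccontr)
    assume "\<not> vec.dim (V \<inter> Z) < r"
    then have "V \<inter> Z = V" using sI sV by (intro vec.subspace_dim_equal) auto
    then have "V \<subseteq> Z" by blast
    then have "V = Z" using sV sZ by (intro vec.subspace_dim_equal) auto
    then show False using ne by simp
  qed
qed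

lemma card_Up:
  fixes Z H :: "('a::{field,finite} ^ 'n) set"
  assumes Z: "Z \<in> Er r" and r: "r \<ge> 1" and rN: "r \<le> CARD('n)"
    and H: "vec.subspace H" "vec.dim H = r - 1" "H \<subseteq> Z"
  shows "real (card ({V \<in> Er r. H \<subseteq> V} - {Z})) = real CARD('a) * gbinom CARD('a) (CARD('n) - r) 1"
proof -
  have q2: "2 \<le> CARD('a)" by (rule card_ge2)
  have sZ: "vec.subspace Z" "vec.dim Z = r" using Z by (auto simp: Er_iff)
  have eq: "{V \<in> Er r. H \<subseteq> V} = {V. vec.subspace V \<and> vec.dim V = Suc (vec.dim H) \<and> H \<subseteq> V \<and> V \<subseteq> UNIV}"
    using H r by (auto simp: Er_iff)
  have "real (card {V. vec.subspace V \<and> vec.dim V = Suc (vec.dim H) \<and> H \<subseteq> V \<and> V \<subseteq> UNIV})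
       = gbinom CARD('a) (Suc (CARD('n) - r)) 1"
    using H rN r by (intro count_ext_g) (auto simp: card_cart_basis)
  then have cU: "real (card {V \<in> Er r. H \<subseteq> V}) = gbinom CARD('a) (Suc (CARD('n) - r)) 1"
    unfolding eq .
  have ZU: "Z \<in> {V \<in> Er r. H \<subseteq> V}" using Z H by auto
  have fU: "finite {V \<in> Er r. H \<subseteq> V}" using finite_Er by simp
  have "card {V \<in> Er r. H \<subseteq> V} \<ge> 1"
    using ZU fU card_gt_0_iff[of "{V \<in> Er r. H \<subseteq> V}"] by force
  moreover have "card ({V \<in> Er r. H \<subseteq> V} - {Z}) = card {V \<in> Er r. H \<subseteq> V} - 1"
    using ZU fU by (simp add: card_Diff_singleton)
  ultimately have "real (card ({V \<in> Er r. H \<subseteq> V} - {Z})) = real (card {V \<in> Er r. H \<subseteq> V}) - 1"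
    by (simp add: of_nat_diff)
  then show ?thesis using cU g_Suc[OF q2] by simp
qed

lemma lower_bound:
  fixes C :: "('a::{field,finite} ^ 'n) set set"
    and r rho :: nat and Z :: "('a ^ 'n) set"
  assumes rN: "r \<le> CARD('n) div 2"
    and "0 < rho" and "rho < r"
    and "C \<subseteq> Er r" and "C \<noteq> {}"
    and cr: "covering_radius r C = rho"
    and Z: "Z \<in> Er r"
  shows "\<exists>S. S \<subseteq> ball_I r 1 Z \<and> S \<inter> {U \<in> Er r. dIset U C = rho} = {}
            \<and> (gbinom CARD('a) rho 1)^2 \<le> real (card S)"
proof -
  define g where "g m = gbinom CARD('a) m 1" for m
  define N where "N = CARD('n)"
  have q2: "2 \<le> CARD('a)" by (rule card_ge2)
  have sZ: "vec.subspace Z" "vec.dim Z = r" using Z by (auto simp: Er_iff)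
  have r2: "r \<ge> 2" using assms by simp
  have Nr: "N \<ge> r + r" using assms(1) unfolding N_def by simp
  have finC: "finite C" using assms(4) finite_Er finite_subset by blast
  define A where "A = {U \<in> Er r. dIset U C = rho}"
  define \<delta> where "\<delta> = dIset Z C"
  obtain C1 where C1: "C1 \<in> C" "dI Z C1 = \<delta>"
  proof -
    have "Min ((\<lambda>X. dI Z X) ` C) \<in> (\<lambda>X. dI Z X) ` C"
      using finC assms(5) by (intro Min_in) auto
    then obtain X where "X \<in> C" "dI Z X = Min ((\<lambda>X. dI Z X) ` C)" by (metis imageE)
    then show ?thesis using that unfolding \<delta>_def dIset_def by simp
  qed
  have C1E: "C1 \<in> Er r" using C1 assms(4) by blast
  have sC1: "vec.subspace C1" "vec.dim C1 = r" using C1E by (auto simp: Er_iff)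
  have dle: "dIset V C \<le> dI V C1" for V
    unfolding dIset_def using finC C1 by (intro Min_le) auto
  have \<delta>le: "\<delta> \<le> rho"
  proof -
    have "dIset Z C \<le> Max ((\<lambda>U. dIset U C) ` Er r)"
      using Z finite_Er by (intro Max_ge) auto
    then show ?thesis using cr unfolding \<delta>_def covering_radius_def by simp
  qed
  have dK0: "vec.dim (Z \<inter> C1) = r - \<delta>"
  proof -
    have "vec.dim (Z \<inter> C1) \<le> r" using sZ vec.dim_subset[of "Z \<inter> C1" Z] by auto
    then show ?thesis using dI_Er[OF Z C1E] C1 by simp
  qed
  have sK0: "vec.subspace (Z \<inter> C1)" using sZ sC1 vec.subspace_inter by blast
  have inB1: "V \<in> ball_I r 1 Z" if "V \<in> Er r" "H \<subseteq> V" "H \<subseteq> Z" "vec.dim H = r - 1" for V H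
  proof -
    have "vec.dim H \<le> vec.dim (Z \<inter> V)" using that by (intro vec.dim_subset) auto
    then show ?thesis using that dI_Er[OF Z that(1)] unfolding ball_I_def by simp
  qed
  have notA: "V \<notin> A" if "V \<in> Er r" "K \<subseteq> V" "K \<subseteq> C1" "vec.dim K \<ge> r - rho + 1" for V K
  proof -
    have "vec.dim K \<le> vec.dim (V \<inter> C1)" using that by (intro vec.dim_subset) auto
    then have "dI V C1 < rho" using that dI_Er[OF that(1) C1E] assms(2,3) by simp
    then show ?thesis using dle[of V] unfolding A_def by simp
  qed
  show ?thesis
  proof (cases "\<delta> < rho")
    case True
    obtain K where K: "vec.subspace K" "K \<subseteq> Z \<inter> C1" "vec.dim K = r - rho + 1"
    proof (rule sub_exists[OF sK0, of "r - rho + 1"])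
      show "r - rho + 1 \<le> vec.dim (Z \<inter> C1)" using dK0 True assms(3) by simp
    qed (use that in auto)
    define HK where "HK = {H. vec.subspace H \<and> vec.dim H = vec.dim Z - 1 \<and> K \<subseteq> H \<and> H \<subseteq> Z}"
    have cHK: "g (rho - 1) \<le> real (card HK)"
      unfolding g_def HK_def
    proof (rule hyp_containing[OF K(1) sZ(1)])
      show "K \<subseteq> Z" using K by auto
      show "vec.dim Z = vec.dim K + (rho - 1)" using K sZ assms(2,3) by simp
    qed
    define Up where "Up (H :: ('a ^ 'n) set) = {V \<in> Er r. H \<subseteq> V} - {Z}" for H
    define S where "S = insert Z (\<Union>H\<in>HK. Up H)"
    have cUp: "real (card (Up H)) = real CARD('a) * g (N - r)" if "H \<in> HK" for H
      unfolding Up_def g_def N_def using that r2 Nr sZ unfolding HK_def N_def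
      by (intro card_Up[OF Z]) auto
    have disj: "\<forall>H1\<in>HK. \<forall>H2\<in>HK. H1 \<noteq> H2 \<longrightarrow> Up H1 \<inter> Up H2 = {}"
    proof (intro ballI impI)
      fix H1 H2 assume H: "H1 \<in> HK" "H2 \<in> HK" "H1 \<noteq> H2"
      show "Up H1 \<inter> Up H2 = {}"
      proof (rule ccontr)
        assume "Up H1 \<inter> Up H2 \<noteq> {}"
        then obtain V where V: "V \<in> Er r" "H1 \<subseteq> V" "H2 \<subseteq> V" "V \<noteq> Z" unfolding Up_def by blast
        have "V \<inter> Z = H1" using V H r2 sZ unfolding HK_def by (intro inter_hyp[OF V(1) Z]) auto
        moreover have "V \<inter> Z = H2" using V H r2 sZ unfolding HK_def by (intro inter_hyp[OF V(1) Z]) auto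
        ultimately show False using H by simp
      qed
    qed
    have finHK: "finite HK" by simp
    have ZnU: "Z \<notin> (\<Union>H\<in>HK. Up H)" unfolding Up_def by blast
    have "card S = Suc (card (\<Union>H\<in>HK. Up H))" unfolding S_def using ZnU
      by (intro card_insert_disjoint) (auto intro: finite_subset)
    also have "card (\<Union>H\<in>HK. Up H) = (\<Sum>H\<in>HK. card (Up H))"
      using disj by (intro card_UN_disjoint[OF finHK]) auto
    finally have "real (card S) = 1 + (\<Sum>H\<in>HK. real (card (Up H)))" by simp
    also have "\<dots> = 1 + real (card HK) * (real CARD('a) * g (N - r))" using cUp by simp
    finally have cS: "real (card S) = 1 + real (card HK) * (real CARD('a) * g (N - r))" .
    have gnn: "0 \<le> g m" for m unfolding g_def using g_nonneg[OF q2] .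
    have gS: "g (Suc m) = 1 + real CARD('a) * g m" for m unfolding g_def using g_Suc[OF q2] .
    have grho: "g rho = 1 + real CARD('a) * g (rho - 1)" using gS[of "rho - 1"] assms(2) by simp
    have gG: "g (N - r) \<ge> 1 + real CARD('a) + (real CARD('a))^2 * g (rho - 1)"
    proof -
      have "g (Suc rho) \<le> g (N - r)" unfolding g_def using Nr assms(3) by (intro g_mono[OF q2]) auto
      then show ?thesis using gS[of rho] grho by (simp add: algebra_simps power2_eq_square)
    qed
    have "(g rho)^2 \<le> 1 + g (rho - 1) * real CARD('a) * g (N - r)"
      unfolding grho using final_ineq[OF _ gnn gG] q2 by simp
    also have "\<dots> \<le> 1 + real (card HK) * (real CARD('a) * g (N - r))"
      using cHK gnn[of "N - r"] by (simp add: mult.assoc mult_right_mono)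
    finally have bound: "(g rho)^2 \<le> real (card S)" using cS by simp
    have SB: "S \<subseteq> ball_I r 1 Z"
    proof
      fix V assume "V \<in> S"
      then consider "V = Z" | H where "H \<in> HK" "V \<in> Up H" unfolding S_def by blast
      then show "V \<in> ball_I r 1 Z"
      proof cases
        case 1
        have "vec.dim (Z \<inter> Z) = r" using sZ by simp
        then show ?thesis using 1 Z dI_Er[OF Z Z] unfolding ball_I_def by simp
      next
        case 2
        then show ?thesis using inB1[of V H] sZ unfolding HK_def Up_def by auto
      qed
    qed
    have SA: "S \<inter> A = {}"
    proof -
      have "Z \<notin> A" using True unfolding A_def \<delta>_def by simp
      moreover have "V \<notin> A" if "H \<in> HK" "V \<in> Up H" for H V
        using notA[of V K] that K unfolding HK_def Up_def by auto
      ultimately show ?thesis unfolding S_def by blast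
    qed
    show ?thesis using SB SA bound unfolding A_def g_def by blast
  next
    case False
    then have dr: "\<delta> = rho" using \<delta>le by simp
    define K where "K = Z \<inter> C1"
    have sK: "vec.subspace K" "vec.dim K = r - rho" "K \<subseteq> Z" "K \<subseteq> C1"
      using sK0 dK0 dr unfolding K_def by auto
    define HK where "HK = {H. vec.subspace H \<and> vec.dim H = vec.dim Z - 1 \<and> K \<subseteq> H \<and> H \<subseteq> Z}"
    have cHK: "g rho \<le> real (card HK)"
      unfolding g_def HK_def
    proof (rule hyp_containing[OF sK(1) sZ(1) sK(3)])
      show "vec.dim Z = vec.dim K + rho" using sK sZ assms(2,3) by simp
    qed
    define X where "X H = ssum H C1" for H :: "('a ^ 'n) set"
    define F where "F H = {V. vec.subspace V \<and> vec.dim V = Suc (vec.dim H) \<and> H \<subseteq> V \<and> V \<subseteq> X H}"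
      for H :: "('a ^ 'n) set"
    have dZC: "vec.dim (ssum Z C1) = r + rho"
      using dim_ssum[OF sZ(1) sC1(1)] sZ sC1 dK0 dr assms(3) by simp
    have HX: "vec.subspace (X H)" "H \<subseteq> X H" "C1 \<subseteq> X H" "vec.dim (X H) = r + rho - 1"
      if "H \<in> HK" for H
    proof -
      have hH: "vec.subspace H" "vec.dim H = r - 1" "K \<subseteq> H" "H \<subseteq> Z"
        using that sZ unfolding HK_def by auto
      show "vec.subspace (X H)" unfolding X_def using hH sC1 by (intro subspace_ssum) auto
      show "H \<subseteq> X H" unfolding X_def using sC1 by (intro ssum_sup1) auto
      show "C1 \<subseteq> X H" unfolding X_def using hH by (intro ssum_sup2) auto
      have "H \<inter> C1 = K" using hH unfolding K_def by blast
      then show "vec.dim (X H) = r + rho - 1"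
        using dim_ssum[OF hH(1) sC1(1)] hH sC1 sK assms(3) unfolding X_def by simp
    qed
    have cF: "real (card (F H)) = g rho" if "H \<in> HK" for H
    proof -
      have hH: "vec.subspace H" "vec.dim H = r - 1"
        using that sZ unfolding HK_def by auto
      have "real (card (F H)) = gbinom CARD('a) (Suc (rho - 1)) 1"
        unfolding F_def using HX[OF that] hH r2 assms(2,3)
        by (intro count_ext_g) auto
      then show ?thesis unfolding g_def using assms(2) by simp
    qed
    have FE: "F H \<subseteq> Er r" if "H \<in> HK" for H
      using that r2 sZ unfolding F_def HK_def by (auto simp: Er_iff)
    have ZF: "Z \<notin> F H" if "H \<in> HK" for H
    proof
      assume "Z \<in> F H"
      then have "Z \<subseteq> X H" unfolding F_def by blast
      then have "ssum Z C1 \<subseteq> X H" using HX[OF that] by (intro ssum_sub) auto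
      then have "vec.dim (ssum Z C1) \<le> vec.dim (X H)" by (rule vec.dim_subset)
      then show False using dZC HX[OF that] assms(2) by simp
    qed
    define S where "S = (\<Union>H\<in>HK. F H)"
    have disj: "\<forall>H1\<in>HK. \<forall>H2\<in>HK. H1 \<noteq> H2 \<longrightarrow> F H1 \<inter> F H2 = {}"
    proof (intro ballI impI)
      fix H1 H2 assume H: "H1 \<in> HK" "H2 \<in> HK" "H1 \<noteq> H2"
      show "F H1 \<inter> F H2 = {}"
      proof (rule ccontr)
        assume "F H1 \<inter> F H2 \<noteq> {}"
        then obtain V where V: "V \<in> F H1" "V \<in> F H2" by blast
        have VE: "V \<in> Er r" using V FE H by blast
        have VZ: "V \<noteq> Z" using V ZF H by blast
        have "V \<inter> Z = H1" using V H r2 sZ VZ unfolding HK_def F_def by (intro inter_hyp[OF VE Z]) auto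
        moreover have "V \<inter> Z = H2" using V H r2 sZ VZ unfolding HK_def F_def by (intro inter_hyp[OF VE Z]) auto
        ultimately show False using H by simp
      qed
    qed
    have finHK: "finite HK" by simp
    have "card S = (\<Sum>H\<in>HK. card (F H))"
      unfolding S_def using disj by (intro card_UN_disjoint[OF finHK]) (auto simp: F_def)
    then have "real (card S) = (\<Sum>H\<in>HK. real (card (F H)))" by simp
    also have "\<dots> = real (card HK) * g rho" using cF by simp
    finally have cS: "real (card S) = real (card HK) * g rho" .
    have gnn: "0 \<le> g rho" unfolding g_def using g_nonneg[OF q2] .
    have bound: "(g rho)^2 \<le> real (card S)"
      unfolding cS power2_eq_square using cHK gnn by (rule mult_right_mono)
    have SB: "S \<subseteq> ball_I r 1 Z"
    proof
      fix V assume "V \<in> S"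
      then obtain H where H: "H \<in> HK" "V \<in> F H" unfolding S_def by blast
      then show "V \<in> ball_I r 1 Z" using inB1[of V H] FE[OF H(1)] sZ unfolding HK_def F_def by auto
    qed
    have SA: "S \<inter> A = {}"
    proof -
      have "V \<notin> A" if "H \<in> HK" "V \<in> F H" for H V
      proof -
        have VE: "V \<in> Er r" using that FE by blast
        have sV: "vec.subspace V" "vec.dim V = r" using VE by (auto simp: Er_iff)
        have "V \<subseteq> X H" using that unfolding F_def by blast
        then have "ssum V C1 \<subseteq> X H" using HX[OF that(1)] by (intro ssum_sub) auto
        then have "vec.dim (ssum V C1) \<le> r + rho - 1" using HX[OF that(1)] vec.dim_subset by metis
        then have "vec.dim (V \<inter> C1) \<ge> r - rho + 1"
          using dim_ssum[OF sV(1) sC1(1)] sV sC1 assms(2,3) by simp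
        then show ?thesis using notA[of V "V \<inter> C1"] VE by auto
      qed
      then show ?thesis unfolding S_def by blast
    qed
    show ?thesis using SB SA bound unfolding A_def g_def by blast
  qed
qed

theorem lemma12:
  fixes C :: "('a::{field,finite} ^ 'n) set set"
    and r rho :: nat and Z :: "('a ^ 'n) set"
  assumes "r \<le> CARD('n) div 2"
    and "0 < rho" and "rho < r"
    and "C \<subseteq> Er r" and "C \<noteq> {}"
    and "covering_radius r C = rho"
    and "Z \<in> {Y \<in> Er r. excess r rho C {Y} \<ge> 1}"
  shows "real (card ({U \<in> Er r. dIset U C = rho} \<inter> ball_I r 1 Z))
           \<le> VC CARD('a) CARD('n) r 1 - cc CARD('a) rho"
proof -
  define g where "g m = gbinom CARD('a) m 1" for m
  define N where "N = CARD('n)"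
  have q2: "2 \<le> CARD('a)" by (rule card_ge2)
  have Z: "Z \<in> Er r" using assms(7) by simp
  have sZ: "vec.subspace Z" "vec.dim Z = r" using Z by (auto simp: Er_iff)
  have r2: "r \<ge> 2" using assms by simp
  have Nr: "N \<ge> r + r" using assms(1) unfolding N_def by simp
  define Hy where "Hy = {H. vec.subspace H \<and> vec.dim H = r - 1 \<and> H \<subseteq> Z}"
  define Up where "Up (H :: (('a ^ 'n) set)) = {V :: ('a ^ 'n) set. vec.subspace V \<and> vec.dim V = Suc (r - 1) \<and> H \<subseteq> V \<and> V \<subseteq> UNIV}" for H
  have UpEr: "Up H \<subseteq> Er r" for H using r2 unfolding Up_def by (auto simp: Er_iff)
  have cUp: "real (card (Up H - {Z})) = real CARD('a) * g (N - r)" if "H \<in> Hy" for H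
  proof -
    have hH: "vec.subspace H" "vec.dim H = r - 1" using that unfolding Hy_def by auto
    have "real (card {V. vec.subspace V \<and> vec.dim V = Suc (vec.dim H) \<and> H \<subseteq> V \<and> V \<subseteq> UNIV})
       = gbinom CARD('a) (Suc (N - r)) 1"
      using hH Nr r2 by (intro count_ext_g) (auto simp: card_cart_basis N_def)
    then have "real (card (Up H)) = g (Suc (N - r))"
      unfolding Up_def g_def using hH by simp
    moreover have "Z \<in> Up H" using that sZ r2 unfolding Up_def Hy_def by auto
    moreover have "finite (Up H)" by simp
    moreover have "card (Up H) \<ge> 1"
      using \<open>Z \<in> Up H\<close> card_gt_0_iff[of "Up H"] by force
    ultimately have "card (Up H - {Z}) = card (Up H) - 1" "card (Up H) \<ge> 1"
      by (auto simp: card_Diff_singleton)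
    then have "real (card (Up H - {Z})) = real (card (Up H)) - 1" by (simp add: of_nat_diff)
    then show ?thesis using \<open>real (card (Up H)) = g (Suc (N - r))\<close> unfolding g_def
      using g_Suc[OF q2] by simp
  qed
  have cHy: "real (card Hy) = g r"
    unfolding Hy_def g_def using card_hyp[OF sZ(1), of "r - 1"] sZ r2 by simp
  have B1: "ball_I r 1 Z \<subseteq> insert Z (\<Union>H\<in>Hy. Up H - {Z})"
  proof
    fix V assume V: "V \<in> ball_I r 1 Z"
    then have VE: "V \<in> Er r" and d: "dI Z V \<le> 1" unfolding ball_I_def by auto
    show "V \<in> insert Z (\<Union>H\<in>Hy. Up H - {Z})"
    proof (cases "V = Z")
      case False
      have lt: "vec.dim (V \<inter> Z) < r" using inter_lt[OF VE Z False] .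
      have "vec.dim (Z \<inter> V) \<ge> r - 1" using d dI_Er[OF Z VE] by simp
      then have "vec.dim (V \<inter> Z) = r - 1" using lt by (simp add: Int_commute)
      moreover have "vec.subspace (V \<inter> Z)" using VE sZ by (auto simp: Er_iff intro: vec.subspace_inter)
      ultimately have "V \<inter> Z \<in> Hy" "V \<in> Up (V \<inter> Z)"
        unfolding Hy_def Up_def using VE r2 by (auto simp: Er_iff)
      then show ?thesis using False by blast
    qed simp
  qed
  have finHy: "finite Hy" by simp
  have "card (ball_I r 1 Z) \<le> card (insert Z (\<Union>H\<in>Hy. Up H - {Z}))"
    using B1 by (intro card_mono) auto
  also have "\<dots> \<le> Suc (card (\<Union>H\<in>Hy. Up H - {Z}))" by (rule card_insert_le_m1) auto
  also have "card (\<Union>H\<in>Hy. Up H - {Z}) \<le> (\<Sum>H\<in>Hy. card (Up H - {Z}))"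
    by (rule card_UN_le[OF finHy])
  finally have "real (card (ball_I r 1 Z)) \<le> 1 + (\<Sum>H\<in>Hy. real (card (Up H - {Z})))"
    by (simp flip: of_nat_sum)
  also have "(\<Sum>H\<in>Hy. real (card (Up H - {Z}))) = real (card Hy) * (real CARD('a) * g (N - r))"
    using cUp by simp
  finally have upper: "real (card (ball_I r 1 Z)) \<le> VC CARD('a) CARD('n) r 1"
    using cHy unfolding VC_def NC_def g_def N_def by (simp add: gbinom_0 algebra_simps)
  obtain S where S: "S \<subseteq> ball_I r 1 Z" "S \<inter> {U \<in> Er r. dIset U C = rho} = {}"
      "(gbinom CARD('a) rho 1)^2 \<le> real (card S)"
    using lower_bound[OF assms(1-6) Z] by blast
  have fB: "finite (ball_I r 1 Z)" unfolding ball_I_def by simp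
  have "{U \<in> Er r. dIset U C = rho} \<inter> ball_I r 1 Z \<subseteq> ball_I r 1 Z - S" using S by blast
  then have "card ({U \<in> Er r. dIset U C = rho} \<inter> ball_I r 1 Z) \<le> card (ball_I r 1 Z - S)"
    by (intro card_mono) (auto simp: fB)
  also have "\<dots> = card (ball_I r 1 Z) - card S" using S fB by (intro card_Diff_subset) (auto intro: finite_subset)
  finally have "real (card ({U \<in> Er r. dIset U C = rho} \<inter> ball_I r 1 Z)) \<le> real (card (ball_I r 1 Z)) - real (card S)"
    using card_mono[OF fB S(1)] by (simp add: of_nat_diff)
  then show ?thesis using upper S(3) unfolding cc_def by simp
qed

end
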